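(* Let $G=(V,E)$ be a connected graph with $\delta(G)\geq 3$ and vertex connectivity $\kappa(G)\geq 2$. Then $V$ can be partitioned into three sets $L$, $R$, $O$ with $|O|\leq 1$ such that every vertex of $L$ has at least two neighbors in $R\cup O$ and every vertex of $R$ has at least two neighbors in $L\cup O$. Moreover, if $G$ contains a cycle of even length, such a partition exists with $O=\emptyset$.
   Context: All graphs are finite and simple. A vertex cut of a connected graph is a set of vertices whose removal leaves a disconnected or trivial graph; $\kappa(G)$ is the minimum size of a vertex cut. *)

theory Defs
  imports Main
begin

definition simple_graph :: "'a set \<Rightarrow> ('a \<Rightarrow> 'a \<Rightarrow> bool) \<Rightarrow> bool" where
  "simple_graph V E \<longleftrightarrow> finite V \<and> (\<forall>u v. E u v \<longrightarrow> u \<in> V \<and> v \<in> V)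
     \<and> (\<forall>u v. E u v \<longrightarrow> E v u) \<and> (\<forall>v. \<not> E v v)"

definition neighbors :: "'a set \<Rightarrow> ('a \<Rightarrow> 'a \<Rightarrow> bool) \<Rightarrow> 'a \<Rightarrow> 'a set" where
  "neighbors V E v = {u \<in> V. E v u}"

definition degree :: "'a set \<Rightarrow> ('a \<Rightarrow> 'a \<Rightarrow> bool) \<Rightarrow> 'a \<Rightarrow> nat" where
  "degree V E v = card (neighbors V E v)"

definition min_degree_ge :: "'a set \<Rightarrow> ('a \<Rightarrow> 'a \<Rightarrow> bool) \<Rightarrow> nat \<Rightarrow> bool" where
  "min_degree_ge V E k \<longleftrightarrow> (\<forall>v \<in> V. k \<le> degree V E v)"

definition connected_graph :: "'a set \<Rightarrow> ('a \<Rightarrow> 'a \<Rightarrow> bool) \<Rightarrow> bool" where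
  "connected_graph V E \<longleftrightarrow> V \<noteq> {} \<and>
     (\<forall>u \<in> V. \<forall>v \<in> V. (\<lambda>x y. x \<in> V \<and> y \<in> V \<and> E x y)\<^sup>*\<^sup>* u v)"

definition vertex_cut :: "'a set \<Rightarrow> ('a \<Rightarrow> 'a \<Rightarrow> bool) \<Rightarrow> 'a set \<Rightarrow> bool" where
  "vertex_cut V E S \<longleftrightarrow> S \<subseteq> V \<and>
     (card (V - S) \<le> 1 \<or> \<not> connected_graph (V - S) E)"

definition vertex_connectivity :: "'a set \<Rightarrow> ('a \<Rightarrow> 'a \<Rightarrow> bool) \<Rightarrow> nat" where
  "vertex_connectivity V E = Min {card S | S. vertex_cut V E S}"

definition is_cycle :: "'a set \<Rightarrow> ('a \<Rightarrow> 'a \<Rightarrow> bool) \<Rightarrow> 'a list \<Rightarrow> bool" where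
  "is_cycle V E cs \<longleftrightarrow> 3 \<le> length cs \<and> distinct cs \<and> set cs \<subseteq> V
     \<and> (\<forall>i < length cs - 1. E (cs ! i) (cs ! (i + 1)))
     \<and> E (last cs) (hd cs)"

definition good_partition :: "'a set \<Rightarrow> ('a \<Rightarrow> 'a \<Rightarrow> bool) \<Rightarrow> 'a set \<Rightarrow> 'a set \<Rightarrow> 'a set \<Rightarrow> bool" where
  "good_partition V E L R Z \<longleftrightarrow>
     L \<union> R \<union> Z = V \<and> L \<inter> R = {} \<and> L \<inter> Z = {} \<and> R \<inter> Z = {} \<and> card Z \<le> 1
     \<and> (\<forall>v \<in> L. 2 \<le> card (neighbors V E v \<inter> (R \<union> Z)))
     \<and> (\<forall>v \<in> R. 2 \<le> card (neighbors V E v \<inter> (L \<union> Z)))"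

end

theory Submission
  imports Defs
begin

definition cutv :: "'a set \<Rightarrow> ('a \<Rightarrow> 'a \<Rightarrow> bool) \<Rightarrow> 'a set \<Rightarrow> nat" where
  "cutv V E L = card {(u,w). u \<in> L \<and> w \<in> V - L \<and> E u w}"

lemma cutv_compl:
  assumes "simple_graph V E" "L \<subseteq> V"
  shows "cutv V E (V - L) = cutv V E L"
proof -
  have eq: "{(u,w). u \<in> V - L \<and> w \<in> V - (V - L) \<and> E u w}
        = (\<lambda>(a,b). (b,a)) ` {(u,w). u \<in> L \<and> w \<in> V - L \<and> E u w}"
    using assms unfolding simple_graph_def by (auto simp: image_iff)
  show ?thesis unfolding cutv_def eq
    by (rule card_image) (auto simp: inj_on_def)
qed

lemma maxcut_local:
  assumes G: "simple_graph V E" and md: "min_degree_ge V E 3"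
    and LV: "L \<subseteq> V" and mx: "\<And>L'. L' \<subseteq> V \<Longrightarrow> cutv V E L' \<le> cutv V E L"
    and vL: "v \<in> L"
  shows "2 \<le> card (neighbors V E v \<inter> (V - L))"
proof -
  have fin: "finite V" using G unfolding simple_graph_def by auto
  have sym: "\<And>u w. E u w \<Longrightarrow> E w u" and inV: "\<And>u w. E u w \<Longrightarrow> u \<in> V \<and> w \<in> V"
    and irr: "\<And>u. \<not> E u u" using G unfolding simple_graph_def by auto
  define A0 where "A0 = {(u,w). u \<in> L \<and> u \<noteq> v \<and> w \<in> V - L \<and> E u w}"
  define B where "B = {(u,w). u = v \<and> w \<in> V - L \<and> E u w}"
  define C where "C = {(u,w). u \<in> L - {v} \<and> w = v \<and> E u w}"
  have finVV: "finite (V \<times> V)" using fin by auto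
  have fA0: "finite A0" by (rule finite_subset[OF _ finVV]) (auto simp: A0_def dest: inV)
  have fB: "finite B" by (rule finite_subset[OF _ finVV]) (auto simp: B_def dest: inV)
  have fC: "finite C" by (rule finite_subset[OF _ finVV]) (auto simp: C_def dest: inV)
  have e1: "{(u,w). u \<in> L \<and> w \<in> V - L \<and> E u w} = A0 \<union> B"
    using vL by (auto simp: A0_def B_def)
  have e2: "{(u,w). u \<in> L - {v} \<and> w \<in> V - (L - {v}) \<and> E u w} = A0 \<union> C"
    using vL LV by (auto simp: A0_def C_def)
  have d1: "A0 \<inter> B = {}" by (auto simp: A0_def B_def)
  have d2: "A0 \<inter> C = {}" using vL by (auto simp: A0_def C_def)
  have cB: "card B = card (neighbors V E v \<inter> (V - L))"
  proof -
    have "B = (\<lambda>w. (v,w)) ` (neighbors V E v \<inter> (V - L))"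
      by (auto simp: B_def neighbors_def)
    then show ?thesis by (simp add: card_image inj_on_def)
  qed
  have cC: "card C = card (neighbors V E v \<inter> L)"
  proof -
    have "C = (\<lambda>u. (u,v)) ` (neighbors V E v \<inter> L)"
      using irr by (auto simp: C_def neighbors_def image_iff dest: sym inV)
    then show ?thesis by (simp add: card_image inj_on_def)
  qed
  have "cutv V E (L - {v}) \<le> cutv V E L" using LV by (intro mx) auto
  then have "card (A0 \<union> C) \<le> card (A0 \<union> B)" unfolding cutv_def e1 e2 .
  then have le: "card C \<le> card B"
    using card_Un_disjoint[OF fA0 fB d1] card_Un_disjoint[OF fA0 fC d2] by simp
  have fN: "finite (neighbors V E v)" using fin by (simp add: neighbors_def)
  have "card (neighbors V E v) = card (neighbors V E v \<inter> (V - L)) + card (neighbors V E v \<inter> L)"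
  proof -
    have "neighbors V E v = (neighbors V E v \<inter> (V - L)) \<union> (neighbors V E v \<inter> L)"
      by (auto simp: neighbors_def)
    then show ?thesis using fN
      by (metis Diff_disjoint Int_Diff Int_Un_distrib Un_Diff_Int card_Un_disjoint
            finite_Int inf_commute inf_left_commute)
  qed
  moreover have "3 \<le> card (neighbors V E v)"
    using md vL LV unfolding min_degree_ge_def degree_def by auto
  ultimately show ?thesis using le cB cC by linarith
qed

theorem mainTheorem5:
  fixes V :: "'a set" and E :: "'a \<Rightarrow> 'a \<Rightarrow> bool"
  assumes "simple_graph V E"
    and "connected_graph V E"
    and "min_degree_ge V E 3"
    and "vertex_connectivity V E \<ge> 2"
  shows "(\<exists>L R Z. good_partition V E L R Z)
       \<and> ((\<exists>cs. is_cycle V E cs \<and> even (length cs)) \<longrightarrow>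
            (\<exists>L R. good_partition V E L R {}))"
proof -
  have fin: "finite V" using assms(1) unfolding simple_graph_def by auto
  let ?S = "cutv V E ` Pow V"
  have fS: "finite ?S" using fin by simp
  have nS: "?S \<noteq> {}" by auto
  obtain L where LV: "L \<subseteq> V" and Lm: "cutv V E L = Max ?S"
    using Max_in[OF fS nS] by auto
  have mx: "\<And>L'. L' \<subseteq> V \<Longrightarrow> cutv V E L' \<le> cutv V E L"
    using Lm fS by simp
  have mx2: "\<And>L'. L' \<subseteq> V \<Longrightarrow> cutv V E L' \<le> cutv V E (V - L)"
    using mx cutv_compl[OF assms(1) LV] by simp
  have hL: "\<forall>v\<in>L. 2 \<le> card (neighbors V E v \<inter> (V - L))"
    using maxcut_local[OF assms(1) assms(3) LV mx] by blast
  have hR: "\<forall>v\<in>V - L. 2 \<le> card (neighbors V E v \<inter> L)"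
  proof
    fix v assume "v \<in> V - L"
    from maxcut_local[OF assms(1) assms(3) _ mx2 this]
    have "2 \<le> card (neighbors V E v \<inter> (V - (V - L)))" by blast
    moreover have "V - (V - L) = L" using LV by auto
    ultimately show "2 \<le> card (neighbors V E v \<inter> L)" by simp
  qed
  have gp: "good_partition V E L (V - L) {}"
    unfolding good_partition_def using LV hL hR by auto
  then show ?thesis by blast
qed

end
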